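(* Let $m_1,m_2,r,n_1,n_2$ be nonnegative integers with $0\le n_2\le n_1$ and $n_1\ge 1$, and let $\gamma_{ik}\in\mathbb{C}$, $i=1,\dots,n_1-n_2$, $k=1,\dots,n_1$, be independent identically distributed random scalars drawn from a continuous (absolutely continuous) distribution on $\mathbb{C}$. Then, almost surely, the following holds: for every family of matrices $\mathbf{A}_1,\dots,\mathbf{A}_{n_1}\in\mathbb{C}^{m_1\times m_2}$ with $\operatorname{rank}(\mathbf{A}_k)\le r$ for all $k$ and \[ \gamma_{i1}\mathbf{A}_1+\gamma_{i2}\mathbf{A}_2+\cdots+\gamma_{in_1}\mathbf{A}_{n_1}=\mathbf{0}\qquad\text{for all } i=1,2,\dots,n_1-n_2, \] we have \[ \dim\Big(\mathcal{C}\big(\mathbf{A}_1,\mathbf{A}_2,\dots,\mathbf{A}_{n_1}\big)\Big)\le n_2 r . \] Moreover, equality holds if, among the $n_1$ subspaces $\mathcal{C}(\mathbf{A}_k)$, some $n_2$ of them have dimension $r$ and are linearly independent (their sum is direct), and $m_1\ge n_2 r$.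
   Context: $\mathcal{C}(\mathbf{A}_1,\dots,\mathbf{A}_n)$ denotes the column space of the horizontally concatenated matrix $[\mathbf{A}_1\ \mathbf{A}_2\ \cdots\ \mathbf{A}_n]$. *)

theory Defs
  imports "HOL-Analysis.Analysis" "HOL-Probability.Probability"
begin

definition col_space :: "'a::field^'n^'m \<Rightarrow> ('a^'m) set" where
  "col_space A = vec.span (columns A)"

text \<open>Column space of the horizontal concatenation [A_k]_{k in K}: span of all their columns.\<close>
definition col_space_concat :: "(nat \<Rightarrow> 'a::field^'n^'m) \<Rightarrow> nat set \<Rightarrow> ('a^'m) set" where
  "col_space_concat A K = vec.span (\<Union>k\<in>K. columns (A k))"

definition indep_subspaces :: "(nat \<Rightarrow> ('a::field^'m) set) \<Rightarrow> nat set \<Rightarrow> bool" where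
  "indep_subspaces V S \<longleftrightarrow>
     (\<forall>v. (\<forall>k\<in>S. v k \<in> V k) \<longrightarrow> (\<Sum>k\<in>S. v k) = 0 \<longrightarrow> (\<forall>k\<in>S. v k = 0))"

end

theory Submission
  imports Defs "Jordan_Normal_Form.Determinant"
begin


lemma dim_columns_le_rank:
  fixes A :: "'a::field^'n^'m"
  shows "vec.dim (columns A) \<le> rank A"
proof -
  obtain R where R: "R \<subseteq> vec.span (Finite_Cartesian_Product.rows A)" "vec.independent R"
     "vec.span (Finite_Cartesian_Product.rows A) \<subseteq> vec.span R" "card R = vec.dim (vec.span (Finite_Cartesian_Product.rows A))"
    using vec.basis_exists by blast
  have fR: "finite R" using R(2) vec.finiteI_independent by blast
  have "\<forall>i. \<exists>u. Finite_Cartesian_Product.row i A = (\<Sum>v\<in>R. u v *s v)"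
  proof
    fix i
    have "Finite_Cartesian_Product.row i A \<in> vec.span R" using R(3) vec.span_base[of "Finite_Cartesian_Product.row i A" "Finite_Cartesian_Product.rows A"]
      by (auto simp: Finite_Cartesian_Product.rows_def)
    then show "\<exists>u. Finite_Cartesian_Product.row i A = (\<Sum>v\<in>R. u v *s v)" using vec.span_finite[OF fR] by auto
  qed
  then obtain u where u: "\<And>i. Finite_Cartesian_Product.row i A = (\<Sum>v\<in>R. u i v *s v)" by metis
  define w where "w v = (\<chi> i. u i v)" for v
  have col: "column j A = (\<Sum>v\<in>R. (v $ j) *s w v)" for j
  proof -
    have "column j A $ i = (\<Sum>v\<in>R. (v $ j) *s w v) $ i" for i
    proof -
      have "column j A $ i = Finite_Cartesian_Product.row i A $ j" by (simp add: Finite_Cartesian_Product.row_def column_def)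
      also have "\<dots> = (\<Sum>v\<in>R. u i v * v $ j)" by (simp add: u sum_component)
      finally show ?thesis by (simp add: sum_component w_def mult.commute)
    qed
    then show ?thesis by (simp add: Finite_Cartesian_Product.vec_eq_iff)
  qed
  have "columns A \<subseteq> vec.span (w ` R)"
  proof
    fix x assume "x \<in> columns A"
    then obtain j where "x = column j A" by (auto simp: columns_def)
    then show "x \<in> vec.span (w ` R)"
      by (simp add: col vec.span_sum vec.span_scale vec.span_base)
  qed
  then have "vec.dim (columns A) \<le> card (w ` R)" using vec.dim_le_card fR by blast
  also have "\<dots> \<le> card R" using fR card_image_le by blast
  also have "\<dots> = rank A" using R(4) by (simp add: row_rank_def_gen)
  finally show ?thesis .
qed

lemma dim_union_le:
  "vec.dim ((S::('a::field^'n) set) \<union> T) \<le> vec.dim S + vec.dim T"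
proof -
  obtain B where B: "B \<subseteq> S" "vec.independent B" "S \<subseteq> vec.span B" "card B = vec.dim S"
    using vec.basis_exists by blast
  obtain C where C: "C \<subseteq> T" "vec.independent C" "T \<subseteq> vec.span C" "card C = vec.dim T"
    using vec.basis_exists by blast
  have f: "finite B" "finite C" using B(2) C(2) vec.finiteI_independent by auto
  have "S \<union> T \<subseteq> vec.span (B \<union> C)"
    using B(3) C(3) vec.span_mono[of B "B \<union> C"] vec.span_mono[of C "B \<union> C"] by auto
  then have "vec.dim (S \<union> T) \<le> card (B \<union> C)" using vec.dim_le_card f by blast
  also have "\<dots> \<le> card B + card C" by (rule card_Un_le)
  finally show ?thesis using B(4) C(4) by simp
qed

lemma dim_UN_le:
  fixes C :: "nat \<Rightarrow> ('a::field^'n) set"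
  assumes "finite L"
  shows "vec.dim (\<Union>l\<in>L. C l) \<le> (\<Sum>l\<in>L. vec.dim (C l))"
  using assms
proof (induction L rule: finite_induct)
  case empty then show ?case by simp
next
  case (insert x F)
  have "vec.dim (\<Union>l\<in>insert x F. C l) = vec.dim (C x \<union> (\<Union>l\<in>F. C l))" by simp
  also have "\<dots> \<le> vec.dim (C x) + vec.dim (\<Union>l\<in>F. C l)" by (rule dim_union_le)
  also have "\<dots> \<le> vec.dim (C x) + (\<Sum>l\<in>F. vec.dim (C l))" using insert by simp
  finally show ?case using insert by simp
qed

lemma span_UN_sum:
  fixes C :: "nat \<Rightarrow> ('a::field^'n) set"
  assumes "finite S" "x \<in> vec.span (\<Union>k\<in>S. C k)"
  shows "\<exists>v. (\<forall>k\<in>S. v k \<in> vec.span (C k)) \<and> x = (\<Sum>k\<in>S. v k)"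
  using assms
proof (induction S arbitrary: x rule: finite_induct)
  case empty then show ?case by simp
next
  case (insert j F)
  have "x \<in> vec.span (C j \<union> (\<Union>k\<in>F. C k))" using insert.prems by simp
  then obtain y z where yz: "x = y + z" "y \<in> vec.span (C j)" "z \<in> vec.span (\<Union>k\<in>F. C k)"
    unfolding vec.span_Un by blast
  obtain v where v: "\<forall>k\<in>F. v k \<in> vec.span (C k)" "z = (\<Sum>k\<in>F. v k)"
    using insert.IH[OF yz(3)] by blast
  define v' where "v' = v(j := y)"
  have "\<forall>k\<in>insert j F. v' k \<in> vec.span (C k)" using v yz by (auto simp: v'_def)
  moreover have "x = (\<Sum>k\<in>insert j F. v' k)"
    using insert.hyps yz v by (simp add: v'_def sum.insert_if) (smt (verit) fun_upd_other sum.cong)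
  ultimately show ?case by blast
qed

lemma dim_UN_indep:
  fixes C :: "nat \<Rightarrow> ('a::field^'n) set"
  assumes "finite S" "indep_subspaces (\<lambda>k. vec.span (C k)) S"
  shows "vec.dim (\<Union>k\<in>S. C k) = (\<Sum>k\<in>S. vec.dim (C k))"
  using assms
proof (induction S rule: finite_induct)
  case empty then show ?case by simp
next
  case (insert j F)
  have indF: "indep_subspaces (\<lambda>k. vec.span (C k)) F"
    unfolding indep_subspaces_def
  proof (intro allI impI ballI)
    fix v k assume v: "\<forall>k\<in>F. v k \<in> vec.span (C k)" "(\<Sum>k\<in>F. v k) = 0" and k: "k \<in> F"
    define v' where "v' = v(j := 0)"
    have "\<forall>k\<in>insert j F. v' k \<in> vec.span (C k)" using v by (auto simp: v'_def vec.span_zero)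
    moreover have "(\<Sum>k\<in>insert j F. v' k) = 0"
      using insert.hyps v by (simp add: v'_def) (smt (verit) fun_upd_other sum.cong)
    ultimately have "\<forall>k\<in>insert j F. v' k = 0" using insert.prems unfolding indep_subspaces_def by blast
    then show "v k = 0" using k insert.hyps by (metis fun_upd_other insertI2 v'_def)
  qed
  have inter: "vec.span (C j) \<inter> vec.span (\<Union>k\<in>F. C k) = {0}"
  proof (safe)
    fix x assume x1: "x \<in> vec.span (C j)" and x2: "x \<in> vec.span (\<Union>k\<in>F. C k)"
    obtain v where v: "\<forall>k\<in>F. v k \<in> vec.span (C k)" "x = (\<Sum>k\<in>F. v k)"
      using span_UN_sum[OF insert.hyps(1) x2] by blast
    define v' where "v' = v(j := -x)"
    have "\<forall>k\<in>insert j F. v' k \<in> vec.span (C k)" using v x1 insert.hyps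
      by (auto simp: v'_def vec.span_neg)
    moreover have "(\<Sum>k\<in>insert j F. v' k) = 0"
    proof -
      have "(\<Sum>k\<in>F. v' k) = (\<Sum>k\<in>F. v k)" using insert.hyps by (auto simp: v'_def intro!: sum.cong)
      then show ?thesis using insert.hyps v by (simp add: v'_def)
    qed
    ultimately have "\<forall>k\<in>insert j F. v' k = 0" using insert.prems unfolding indep_subspaces_def by blast
    then show "x = 0" by (auto simp: v'_def)
  qed (simp_all add: vec.span_zero)
  have "vec.dim (\<Union>k\<in>insert j F. C k) = vec.dim (vec.span (C j \<union> (\<Union>k\<in>F. C k)))" by simp
  also have "\<dots> = vec.dim {x + y |x y. x \<in> vec.span (C j) \<and> y \<in> vec.span (\<Union>k\<in>F. C k)}"
    by (simp only: vec.span_Un)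
  also have "\<dots> = vec.dim (vec.span (C j)) + vec.dim (vec.span (\<Union>k\<in>F. C k))"
    using vec.dim_sums_Int[OF vec.subspace_span vec.subspace_span, of "C j" "\<Union>k\<in>F. C k"] inter
    by simp
  also have "\<dots> = vec.dim (C j) + (\<Sum>k\<in>F. vec.dim (C k))" using insert.IH[OF indF] by simp
  finally show ?case using insert.hyps by simp
qed

lemma separating_functional:
  fixes W :: "('a::field^'n) set"
  assumes "v \<notin> vec.span W"
  shows "\<exists>\<phi>. (\<forall>(K::nat set) c x. finite K \<longrightarrow> \<phi> (\<Sum>k\<in>K. c k *s x k) = (\<Sum>k\<in>K. c k * \<phi> (x k)))
      \<and> (\<forall>w\<in>vec.span W. \<phi> w = 0) \<and> \<phi> v = 1"
proof -
  obtain B where B: "B \<subseteq> vec.span W" "vec.independent B" "vec.span W \<subseteq> vec.span B"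
    using vec.basis_exists by blast
  have spB: "vec.span B = vec.span W"
    by (intro subset_antisym vec.span_minimal[OF B(1) vec.subspace_span] B(3))
  have vB: "v \<notin> vec.span B" using assms spB by simp
  have indI: "vec.independent (insert v B)" using vec.independent_insertI[OF vB B(2)] .
  define E where "E = vec.extend_basis (insert v B)"
  have E: "insert v B \<subseteq> E" "vec.independent E" "vec.span E = UNIV"
    using vec.extend_basis_superset[OF indI] vec.independent_extend_basis[OF indI]
      vec.span_extend_basis[OF indI] by (auto simp: E_def)
  define \<phi> where "\<phi> x = vec.representation E x v" for x
  have 1: "\<phi> (\<Sum>k\<in>K. c k *s x k) = (\<Sum>k\<in>K. c k * \<phi> (x k))" if "finite K" for K c x
    unfolding \<phi>_def
    using E(2,3) by (simp add: vec.representation_sum vec.representation_scale)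
  have 2: "\<phi> w = 0" if "w \<in> vec.span W" for w
  proof -
    have "w \<in> vec.span B" using that spB by simp
    then have "vec.representation E w = vec.representation B w"
      using vec.representation_extend[OF E(2) _ ] E(1) by blast
    moreover have "v \<notin> B" using vB vec.span_base by blast
    ultimately show ?thesis unfolding \<phi>_def using vec.representation_ne_zero by metis
  qed
  have 3: "\<phi> v = 1" unfolding \<phi>_def using vec.representation_basis[OF E(2)] E(1) by simp
  show ?thesis using 1 2 3 by blast
qed



lemma AE_affine:
  fixes \<mu> :: "complex measure" and I :: "'i set" and c :: 'i
  assumes fin: "finite I" and c: "c \<in> I" and P: "prob_space \<mu>" and S: "sets \<mu> = sets borel"
    and pt: "\<And>z. emeasure \<mu> {z} = 0"
    and g: "g \<in> borel_measurable (PiM I (\<lambda>_. \<mu>))"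
    and h: "h \<in> borel_measurable (PiM I (\<lambda>_. \<mu>))"
    and gi: "\<And>\<gamma> y. g (\<gamma>(c:=y)) = g \<gamma>" and hi: "\<And>\<gamma> y. h (\<gamma>(c:=y)) = h \<gamma>"
  shows "AE \<gamma> in PiM I (\<lambda>_. \<mu>). g \<gamma> \<noteq> 0 \<longrightarrow> \<gamma> c * g \<gamma> + h \<gamma> \<noteq> 0"
proof -
  interpret product_sigma_finite "\<lambda>_. \<mu>"
    using prob_space_imp_sigma_finite[OF P] by (simp add: product_sigma_finite_def)
  let ?M = "PiM I (\<lambda>_. \<mu>)"
  have cm: "(\<lambda>\<gamma>. \<gamma> c) \<in> borel_measurable ?M"
    using measurable_component_singleton[OF c, of "\<lambda>_. \<mu>"] measurable_cong_sets[OF refl S]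
    by blast
  define N where "N = {\<gamma> \<in> space ?M. g \<gamma> \<noteq> 0 \<and> \<gamma> c * g \<gamma> + h \<gamma> = 0}"
  have Nm: "N \<in> sets ?M" unfolding N_def using g h cm by measurable
  have I': "I = insert c (I - {c})" using c by auto
  have "emeasure ?M N = (\<integral>\<^sup>+\<gamma>. indicator N \<gamma> \<partial>?M)" using Nm by simp
  also have "\<dots> = (\<integral>\<^sup>+x. (\<integral>\<^sup>+y. indicator N (x(c:=y)) \<partial>\<mu>) \<partial>PiM (I - {c}) (\<lambda>_. \<mu>))"
  proof -
    have m: "indicator N \<in> borel_measurable (PiM (insert c (I - {c})) (\<lambda>_. \<mu>))"
      using Nm I' by simp
    show ?thesis
      using product_nn_integral_insert[of "I - {c}" c "indicator N", OF _ _ m] fin I'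
      by simp
  qed
  also have "\<dots> = (\<integral>\<^sup>+x. 0 \<partial>PiM (I - {c}) (\<lambda>_. \<mu>))"
  proof (rule nn_integral_cong)
    fix x
    have le: "indicator N (x(c:=y)) \<le> (indicator {- h x / g x} y :: ennreal)" for y
    proof (cases "x(c:=y) \<in> N")
      case True
      then have "g x \<noteq> 0" "y * g x + h x = 0"
        unfolding N_def using gi[of x y] hi[of x y] by auto
      then have "y = - h x / g x" by (simp add: field_simps add_eq_0_iff)
      then show ?thesis using True by simp
    qed simp
    have "(\<integral>\<^sup>+y. indicator N (x(c:=y)) \<partial>\<mu>) \<le> (\<integral>\<^sup>+y. indicator {- h x / g x} y \<partial>\<mu>)"
      by (intro nn_integral_mono le)
    also have "\<dots> = emeasure \<mu> {- h x / g x}"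
      by (rule nn_integral_indicator) (simp add: S)
    also have "\<dots> = 0" by (rule pt)
    finally show "(\<integral>\<^sup>+y. indicator N (x(c:=y)) \<partial>\<mu>) = 0" by simp
  qed
  also have "\<dots> = 0" by simp
  finally have "N \<in> null_sets ?M" using Nm by auto
  then show ?thesis by (rule AE_I') (auto simp: N_def)
qed

lemma det_meas:
  fixes \<iota> :: "nat \<times> nat \<Rightarrow> 'i" and \<mu> :: "complex measure"
  assumes sub: "\<iota> ` ({..<d}\<times>{..<d}) \<subseteq> I" and S: "sets \<mu> = sets borel"
  shows "(\<lambda>\<gamma>. det (mat d d (\<lambda>(i,j). \<gamma> (\<iota>(i,j))))) \<in> borel_measurable (PiM I (\<lambda>_. \<mu>))"
proof -
  have cm: "(\<lambda>\<gamma>. \<gamma> c) \<in> borel_measurable (PiM I (\<lambda>_. \<mu>))" if "c \<in> I" for c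
    using measurable_component_singleton[OF that, of "\<lambda>_. \<mu>"] measurable_cong_sets[OF refl S]
    by blast
  have eq: "(\<lambda>\<gamma>. det (mat d d (\<lambda>(i,j). \<gamma> (\<iota>(i,j))))) =
    (\<lambda>\<gamma>. \<Sum>p\<in>{p. p permutes {0..<d}}. signof p * (\<Prod>i=0..<d. \<gamma> (\<iota>(i, p i))))"
  proof
    fix \<gamma>
    show "det (mat d d (\<lambda>(i,j). \<gamma> (\<iota>(i,j)))) =
      (\<Sum>p\<in>{p. p permutes {0..<d}}. signof p * (\<Prod>i=0..<d. \<gamma> (\<iota>(i, p i))))"
    proof -
      have "det (mat d d (\<lambda>(i,j). \<gamma> (\<iota>(i,j)))) = (\<Sum>p\<in>{p. p permutes {0..<d}}. signof p * (\<Prod>i=0..<d. mat d d (\<lambda>(i,j). \<gamma> (\<iota>(i,j))) $$ (i, p i)))"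
        by (simp add: det_def)
      also have "\<dots> = (\<Sum>p\<in>{p. p permutes {0..<d}}. signof p * (\<Prod>i=0..<d. \<gamma> (\<iota>(i, p i))))"
      proof (intro sum.cong refl arg_cong2[where f="(*)"] prod.cong)
        fix p i assume a: "p \<in> {p. p permutes {0..<d}}" "i \<in> {0..<d}"
        then have "p i < d" by (auto simp: permutes_in_image)
        then show "mat d d (\<lambda>(i, j). \<gamma> (\<iota> (i, j))) $$ (i, p i) = \<gamma> (\<iota> (i, p i))"
          using a by simp
      qed
      finally show ?thesis .
    qed
  qed
  show ?thesis
    unfolding eq
  proof (intro borel_measurable_sum borel_measurable_times borel_measurable_const borel_measurable_prod)
    fix p i assume "p \<in> {p. p permutes {0..<d}}" "i \<in> {0..<d}"
    then have "p i < d" by (auto simp: permutes_in_image)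
    then have "\<iota>(i, p i) \<in> I" using sub \<open>i \<in> {0..<d}\<close> by auto
    then show "(\<lambda>\<gamma>. \<gamma> (\<iota> (i, p i))) \<in> borel_measurable (PiM I (\<lambda>_. \<mu>))" by (rule cm)
  qed
qed

lemma AE_det:
  fixes \<iota> :: "nat \<times> nat \<Rightarrow> 'i" and \<mu> :: "complex measure"
  assumes fin: "finite I" and P: "prob_space \<mu>" and S: "sets \<mu> = sets borel"
    and pt: "\<And>z. emeasure \<mu> {z} = 0"
    and inj: "inj_on \<iota> ({..<d}\<times>{..<d})" and sub: "\<iota> ` ({..<d}\<times>{..<d}) \<subseteq> I"
  shows "AE \<gamma> in PiM I (\<lambda>_. \<mu>). det (mat d d (\<lambda>(i,j). \<gamma> (\<iota>(i,j)))) \<noteq> 0"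
  using inj sub
proof (induction d)
  case 0
  then show ?case by (simp add: det_def)
next
  case (Suc d)
  have inj': "inj_on \<iota> ({..<d}\<times>{..<d})" using Suc.prems(1) by (rule inj_on_subset) auto
  have sub': "\<iota> ` ({..<d}\<times>{..<d}) \<subseteq> I" using Suc.prems(2) by auto
  note IH = Suc.IH[OF inj' sub']
  define c where "c = \<iota>(d,d)"
  have cI: "c \<in> I" using Suc.prems(2) by (auto simp: c_def)
  define M where "M \<gamma> = mat (Suc d) (Suc d) (\<lambda>(i,j). \<gamma> (\<iota>(i,j)))" for \<gamma> :: "'i \<Rightarrow> complex"
  define g where "g \<gamma> = det (mat d d (\<lambda>(i,j). \<gamma> (\<iota>(i,j))))" for \<gamma> :: "'i \<Rightarrow> complex"
  define h where "h \<gamma> = det (M \<gamma>) - \<gamma> c * g \<gamma>" for \<gamma>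
  have Mc: "M \<gamma> \<in> carrier_mat (Suc d) (Suc d)" for \<gamma> by (simp add: M_def)
  have del: "mat_delete (M \<gamma>) d d = mat d d (\<lambda>(i,j). \<gamma> (\<iota>(i,j)))" for \<gamma>
    by (rule eq_matI) (auto simp: mat_delete_def M_def)
  have detM: "det (M \<gamma>) = \<gamma> c * g \<gamma> + (\<Sum>j<d. M \<gamma> $$ (d,j) * cofactor (M \<gamma>) d j)" for \<gamma>
  proof -
    have "det (M \<gamma>) = (\<Sum>j<Suc d. M \<gamma> $$ (d,j) * cofactor (M \<gamma>) d j)"
      by (rule laplace_expansion_row[OF Mc]) simp
    also have "\<dots> = (\<Sum>j<d. M \<gamma> $$ (d,j) * cofactor (M \<gamma>) d j) + M \<gamma> $$ (d,d) * cofactor (M \<gamma>) d d"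
      by simp
    also have "M \<gamma> $$ (d,d) * cofactor (M \<gamma>) d d = \<gamma> c * g \<gamma>"
    proof -
      have "M \<gamma> $$ (d,d) = \<gamma> c" by (simp add: M_def c_def)
      moreover have "cofactor (M \<gamma>) d d = g \<gamma>" unfolding cofactor_def del g_def by simp
      ultimately show ?thesis by simp
    qed
    finally show ?thesis by simp
  qed
  have hform: "h \<gamma> = (\<Sum>j<d. M \<gamma> $$ (d,j) * cofactor (M \<gamma>) d j)" for \<gamma>
    by (simp add: h_def detM)
  have neq: "\<iota>(i,j) \<noteq> c" if "i < Suc d" "j < Suc d" "(i,j) \<noteq> (d,d)" for i j
    using inj_onD[OF Suc.prems(1), of "(i,j)" "(d,d)"] that by (auto simp: c_def)
  have gi: "g (\<gamma>(c:=y)) = g \<gamma>" for \<gamma> y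
  proof -
    have "mat d d (\<lambda>(i,j). (\<gamma>(c:=y)) (\<iota>(i,j))) = mat d d (\<lambda>(i,j). \<gamma> (\<iota>(i,j)))"
      by (rule eq_matI) (use neq in auto)
    then show ?thesis by (simp add: g_def)
  qed
  have hi: "h (\<gamma>(c:=y)) = h \<gamma>" for \<gamma> y
    unfolding hform
  proof (intro sum.cong refl arg_cong2[where f="(*)"])
    fix j assume j: "j \<in> {..<d}"
    show "M (\<gamma>(c := y)) $$ (d, j) = M \<gamma> $$ (d, j)" using j neq[of d j] by (simp add: M_def)
    have "mat_delete (M (\<gamma>(c := y))) d j = mat_delete (M \<gamma>) d j"
      by (rule eq_matI) (use neq j in \<open>auto simp: mat_delete_def M_def\<close>)
    then show "cofactor (M (\<gamma>(c := y))) d j = cofactor (M \<gamma>) d j" by (simp add: cofactor_def)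
  qed
  have gm: "g \<in> borel_measurable (PiM I (\<lambda>_. \<mu>))"
    unfolding g_def by (rule det_meas[OF sub' S])
  have Mm: "(\<lambda>\<gamma>. det (M \<gamma>)) \<in> borel_measurable (PiM I (\<lambda>_. \<mu>))"
    unfolding M_def by (rule det_meas[OF Suc.prems(2) S])
  have cm: "(\<lambda>\<gamma>. \<gamma> c) \<in> borel_measurable (PiM I (\<lambda>_. \<mu>))"
    using measurable_component_singleton[OF cI, of "\<lambda>_. \<mu>"] measurable_cong_sets[OF refl S]
    by blast
  have hm: "h \<in> borel_measurable (PiM I (\<lambda>_. \<mu>))"
    unfolding h_def using Mm cm gm by measurable
  have A: "AE \<gamma> in PiM I (\<lambda>_. \<mu>). g \<gamma> \<noteq> 0 \<longrightarrow> \<gamma> c * g \<gamma> + h \<gamma> \<noteq> 0"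
    by (rule AE_affine[OF fin cI P S pt gm hm gi hi])
  show ?case
    using IH A
  proof eventually_elim
    case (elim \<gamma>)
    have g0: "g \<gamma> \<noteq> 0" 
    proof -
      have e: "(\<lambda>(i,j). \<gamma>(\<iota>(i,j))) = (\<lambda>a. \<gamma>(\<iota> a))" by auto
      show ?thesis using elim(1) unfolding g_def e by simp
    qed
    have "\<gamma> c * g \<gamma> + h \<gamma> \<noteq> 0" using elim(2) g0 by blast
    then have "det (M \<gamma>) \<noteq> 0" by (simp add: h_def)
    moreover have e: "(\<lambda>(i,j). \<gamma>(\<iota>(i,j))) = (\<lambda>a. \<gamma>(\<iota> a))" by auto
    ultimately show ?case unfolding M_def e by simp
  qed
qed



lemma cols_in_W:
  fixes A :: "nat \<Rightarrow> complex^'m2^'m1" and \<gamma> :: "nat \<times> nat \<Rightarrow> complex"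
  assumes n: "n2 \<le> n1"
    and det0: "det (mat (n1 - n2) (n1 - n2) (\<lambda>(i,j). \<gamma> (i, n2+j))) \<noteq> 0"
    and eqs: "\<forall>i<n1 - n2. \<forall>a b. (\<Sum>k<n1. \<gamma>(i,k) * (A k $ a $ b)) = 0"
    and k: "k < n1"
  shows "columns (A k) \<subseteq> vec.span (\<Union>l<n2. columns (A l))"
proof
  fix v assume v: "v \<in> columns (A k)"
  then obtain b where vb: "v = column b (A k)" by (auto simp: columns_def)
  let ?W = "\<Union>l<n2. columns (A l)"
  show "v \<in> vec.span ?W"
  proof (rule ccontr)
    assume nv: "v \<notin> vec.span ?W"
    then have kn: "n2 \<le> k" using v vec.span_base[of v ?W] by (cases "k < n2") auto
    obtain \<phi> where phi_lin: "\<And>(K::nat set) c x. finite K \<Longrightarrow> \<phi> (\<Sum>k\<in>K. c k *s x k) = (\<Sum>k\<in>K. c k * \<phi> (x k))"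
      and phi0: "\<And>w. w \<in> vec.span ?W \<Longrightarrow> \<phi> w = 0" and phiv: "\<phi> v = 1"
      using separating_functional[OF nv] by blast
    define d where "d = n1 - n2"
    define X where "X j = \<phi> (column b (A j))" for j
    have X0: "X l = 0" if "l < n2" for l
      unfolding X_def using that
      by (intro phi0 vec.span_base) (auto simp: columns_def)
    have row0: "(\<Sum>t<d. \<gamma>(i, n2+t) * X (n2+t)) = 0" if i: "i < d" for i
    proof -
      have "(\<Sum>j<n1. \<gamma>(i,j) *s column b (A j)) = 0"
      proof (rule Finite_Cartesian_Product.vec_eq_iff[THEN iffD2], intro allI)
        fix a
        have "(\<Sum>j<n1. \<gamma>(i,j) *s column b (A j)) $ a = (\<Sum>j<n1. \<gamma>(i,j) * (A j $ a $ b))"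
          by (simp add: sum_component column_def)
        also have "\<dots> = 0" using eqs i by (simp add: d_def)
        finally show "(\<Sum>j<n1. \<gamma>(i,j) *s column b (A j)) $ a = (0::complex^'m1) $ a" by simp
      qed
      then have "(\<Sum>j<n1. \<gamma>(i,j) * X j) = \<phi> 0"
        unfolding X_def using phi_lin[of "{..<n1}" "\<lambda>j. \<gamma>(i,j)" "\<lambda>j. column b (A j)"] by simp
      also have "\<phi> 0 = 0" by (rule phi0) (rule vec.span_zero)
      finally have s: "(\<Sum>j<n1. \<gamma>(i,j) * X j) = 0" .
      have "(\<Sum>j<n1. \<gamma>(i,j) * X j) = (\<Sum>j<n2. \<gamma>(i,j) * X j) + (\<Sum>j\<in>{n2..<n1}. \<gamma>(i,j) * X j)"
        unfolding lessThan_atLeast0 using sum.atLeastLessThan_concat[of 0 n2 n1 "\<lambda>j. \<gamma>(i,j) * X j"] n by simp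
      also have "(\<Sum>j<n2. \<gamma>(i,j) * X j) = 0" using X0 by simp
      also have "(\<Sum>j\<in>{n2..<n1}. \<gamma>(i,j) * X j) = (\<Sum>t<d. \<gamma>(i, n2+t) * X (n2+t))"
      proof -
        have "{n2..<n1} = (\<lambda>t. n2 + t) ` {..<d}"
        proof (intro equalityI subsetI)
          fix x assume "x \<in> {n2..<n1}"
          then have "x = n2 + (x - n2)" "x - n2 < d" using n by (auto simp: d_def)
          then show "x \<in> (\<lambda>t. n2 + t) ` {..<d}" by blast
        qed (auto simp: d_def)
        then show ?thesis by (simp add: sum.reindex)
      qed
      finally show ?thesis using s by simp
    qed
    define G where "G = mat d d (\<lambda>(i,j). \<gamma> (i, n2+j))"
    define w where "w = Matrix.vec d (\<lambda>t. X (n2+t))"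
    have Gc: "G \<in> carrier_mat d d" by (simp add: G_def)
    have wc: "w \<in> carrier_vec d" by (simp add: w_def)
    have Gw: "G *\<^sub>v w = 0\<^sub>v d"
    proof (rule eq_vecI)
      fix i assume "i < dim_vec (0\<^sub>v d :: complex Matrix.vec)"
      then have i: "i < d" by simp
      have "(G *\<^sub>v w) $ i = (\<Sum>t<d. \<gamma>(i, n2+t) * X (n2+t))"
        using i by (simp add: G_def w_def scalar_prod_def lessThan_atLeast0)
      then show "(G *\<^sub>v w) $ i = 0\<^sub>v d $ i" using row0[OF i] i by simp
    qed (simp add: G_def)
    have "det G \<noteq> 0" using det0 by (simp add: G_def d_def)
    then have "w = 0\<^sub>v d" using det_0_iff_vec_prod_zero[OF Gc] wc Gw by blast
    moreover have "k - n2 < d" using k kn by (simp add: d_def)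
    ultimately have "X (n2 + (k - n2)) = 0" unfolding w_def
      by (metis index_vec index_zero_vec(1))
    then have "X k = 0" using kn by simp
    then show False using phiv vb by (simp add: X_def)
  qed
qed


theorem lemma1:
  fixes \<mu> :: "complex measure" and n1 n2 r :: nat
  assumes "n2 \<le> n1" and "1 \<le> n1"
    and "prob_space \<mu>" and "sets \<mu> = sets borel"
    and "absolutely_continuous lborel \<mu>"
  shows "AE \<gamma> in PiM ({..<n1 - n2} \<times> {..<n1}) (\<lambda>_. \<mu>).
     \<forall>A :: nat \<Rightarrow> complex^'m2^'m1.
       ((\<forall>k<n1. rank (A k) \<le> r) \<and>
        (\<forall>i<n1 - n2. \<forall>a b. (\<Sum>k<n1. \<gamma> (i, k) * (A k $ a $ b)) = 0)) \<longrightarrow>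
       vec.dim (col_space_concat A {..<n1}) \<le> n2 * r \<and>
       (((\<exists>S\<subseteq>{..<n1}. card S = n2 \<and> (\<forall>k\<in>S. vec.dim (col_space (A k)) = r) \<and>
            indep_subspaces (\<lambda>k. col_space (A k)) S) \<and> n2 * r \<le> CARD('m1))
         \<longrightarrow> vec.dim (col_space_concat A {..<n1}) = n2 * r)"
proof -
  note n = assms(1) and P = assms(3) and S = assms(4) and ac = assms(5)
  define d where "d = n1 - n2"
  define \<iota> where "\<iota> = (\<lambda>p::nat\<times>nat. (fst p, n2 + snd p))"
  have pt: "emeasure \<mu> {z} = 0" for z
  proof -
    have "{z} \<in> null_sets lborel" by (rule finite_imp_null_set_lborel) simp
    then have "{z} \<in> null_sets \<mu>" using ac unfolding absolutely_continuous_def by blast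
    then show ?thesis by auto
  qed
  have inj: "inj_on \<iota> ({..<d}\<times>{..<d})" by (auto simp: inj_on_def \<iota>_def)
  have sub: "\<iota> ` ({..<d}\<times>{..<d}) \<subseteq> {..<n1 - n2} \<times> {..<n1}" using n by (auto simp: \<iota>_def d_def)
  have AEd: "AE \<gamma> in PiM ({..<n1 - n2} \<times> {..<n1}) (\<lambda>_. \<mu>). det (mat d d (\<lambda>(i,j). \<gamma> (\<iota>(i,j)))) \<noteq> 0"
    by (rule AE_det[OF _ P S pt inj sub]) simp
  show ?thesis
    using AEd
  proof (rule eventually_mono, intro allI impI)
    fix \<gamma> :: "nat \<times> nat \<Rightarrow> complex" and A :: "nat \<Rightarrow> complex^'m2^'m1"
    assume det: "det (mat d d (\<lambda>(i,j). \<gamma> (\<iota>(i,j)))) \<noteq> 0"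
    assume hyp: "(\<forall>k<n1. rank (A k) \<le> r) \<and>
        (\<forall>i<n1 - n2. \<forall>a b. (\<Sum>k<n1. \<gamma> (i, k) * (A k $ a $ b)) = 0)"
    have e: "(\<lambda>(i,j). \<gamma> (\<iota>(i,j))) = (\<lambda>(i,j). \<gamma> (i, n2+j))" by (auto simp: \<iota>_def)
    have det0: "det (mat (n1 - n2) (n1 - n2) (\<lambda>(i,j). \<gamma> (i, n2+j))) \<noteq> 0"
      using det unfolding e d_def .
    let ?W = "\<Union>l<n2. columns (A l)"
    let ?U = "\<Union>k<n1. columns (A k)"
    have UW: "?U \<subseteq> vec.span ?W" using cols_in_W[OF n det0 conjunct2[OF hyp]] by blast
    have le: "vec.dim (col_space_concat A {..<n1}) \<le> n2 * r"
    proof -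
      have "vec.dim (col_space_concat A {..<n1}) = vec.dim ?U" by (simp add: col_space_concat_def)
      also have "\<dots> \<le> vec.dim (vec.span ?W)" by (rule vec.dim_subset[OF UW])
      also have "\<dots> = vec.dim ?W" by simp
      also have "\<dots> \<le> (\<Sum>l<n2. vec.dim (columns (A l)))" by (rule dim_UN_le) simp
      also have "\<dots> \<le> (\<Sum>l<n2. r)"
      proof (rule sum_mono)
        fix l assume "l \<in> {..<n2}"
        then have "rank (A l) \<le> r" using hyp n by auto
        then show "vec.dim (columns (A l)) \<le> r" using dim_columns_le_rank[of "A l"] by linarith
      qed
      also have "\<dots> = n2 * r" by simp
      finally show ?thesis .
    qed
    show "vec.dim (col_space_concat A {..<n1}) \<le> n2 * r \<and>
       (((\<exists>S\<subseteq>{..<n1}. card S = n2 \<and> (\<forall>k\<in>S. vec.dim (col_space (A k)) = r) \<and>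
            indep_subspaces (\<lambda>k. col_space (A k)) S) \<and> n2 * r \<le> CARD('m1))
         \<longrightarrow> vec.dim (col_space_concat A {..<n1}) = n2 * r)"
    proof (intro conjI impI le)
      assume "(\<exists>S\<subseteq>{..<n1}. card S = n2 \<and> (\<forall>k\<in>S. vec.dim (col_space (A k)) = r) \<and>
            indep_subspaces (\<lambda>k. col_space (A k)) S) \<and> n2 * r \<le> CARD('m1)"
      then obtain T where T: "T \<subseteq> {..<n1}" "card T = n2" "\<forall>k\<in>T. vec.dim (col_space (A k)) = r"
        "indep_subspaces (\<lambda>k. col_space (A k)) T" by blast
      have fT: "finite T" using T(1) finite_subset by blast
      have "n2 * r = (\<Sum>k\<in>T. vec.dim (columns (A k)))"
        using T(2,3) by (simp add: col_space_def)
      also have "\<dots> = vec.dim (\<Union>k\<in>T. columns (A k))"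
        using dim_UN_indep[OF fT, of "\<lambda>k. columns (A k)"] T(4) by (simp add: col_space_def)
      also have "\<dots> \<le> vec.dim ?U" by (rule vec.dim_subset) (use T(1) in auto)
      also have "\<dots> = vec.dim (col_space_concat A {..<n1})" by (simp add: col_space_concat_def)
      finally show "vec.dim (col_space_concat A {..<n1}) = n2 * r" using le by simp
    qed
  qed
qed

end
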